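(* Let $\mathfrak{g}$ be a solvable Lie algebra of dimension $n$ (over $\mathbb{C}$, or real and complexified), with $k=\dim H^1(\mathfrak{g})$, weights $\alpha_{k+1},\dots,\alpha_n$ of the completely reducible representation associated to $\mathrm{ad}|_{[\mathfrak{g},\mathfrak{g}]}$, and let $\Omega_{\mathfrak{g}}$ be the finite set of all sums $\alpha_{i_1}+\dots+\alpha_{i_p}$, $k+1\le i_1<\dots<i_p\le n$, $p\ge 1$. Then there is a subset $\tilde\Omega_{\mathfrak{g}}\subseteq\Omega_{\mathfrak{g}}$, depending only on $\mathfrak{g}$, such that for every closed $1$-form $\omega\in\mathfrak{g}^*$ and scalar $\lambda$, the cohomology $H^*_{\lambda\omega}(\mathfrak{g})$ is non-trivial if and only if $-\lambda\omega\in\{0\}\cup\tilde\Omega_{\mathfrak{g}}$. In particular the set of such $-\lambda\omega$ is a finite subset of $H^1(\mathfrak{g})$.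
   Context: The differential $d$ on $\Lambda^*(\mathfrak{g}^* )$ is $df(X_1,\dots,X_{q+1})=\sum_{1\le i<j\le q+1}(-1)^{i+j-1}f([X_i,X_j],X_1,\dots,\hat X_i,\dots,\hat X_j,\dots,X_{q+1})$; closed $1$-forms on $\mathfrak{g}$ are identified with $H^1(\mathfrak{g})$. For a closed $1$-form $\omega$ and scalar $\lambda$, $H^*_{\lambda\omega}(\mathfrak{g})$ is the cohomology of $\Lambda^*(\mathfrak{g}^* )$ with differential $d_{\lambda\omega}(a)=da+\lambda\omega\wedge a$ (the cohomology of $\mathfrak{g}$ with coefficients in the one-dimensional representation $\xi\mapsto\lambda\omega(\xi)$). The weights $\alpha_j\in\mathfrak{g}^*$ are the linear forms by which $\mathfrak{g}$ acts on the one-dimensional quotients of an $\mathrm{ad}$-invariant flag in $[\mathfrak{g},\mathfrak{g}]$ (Lie's theorem). *)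

theory Defs
  imports "HOL-Analysis.Analysis"
begin

text \<open>A finite-dimensional complex Lie algebra is modelled on the complex vector space
  complex^'n (dimension CARD('n)), with a bracket br.\<close>

type_synonym 'n lvec = "complex ^ 'n"

definition lie_algebra :: "('n::finite lvec \<Rightarrow> 'n lvec \<Rightarrow> 'n lvec) \<Rightarrow> bool" where
  "lie_algebra br \<longleftrightarrow>
     (\<forall>a b x y z. br (a *s x + b *s y) z = a *s br x z + b *s br y z) \<and>
     (\<forall>a b x y z. br z (a *s x + b *s y) = a *s br z x + b *s br z y) \<and>
     (\<forall>x. br x x = 0) \<and>
     (\<forall>x y z. br x (br y z) + br y (br z x) + br z (br x y) = 0)"

definition derived :: "('n::finite lvec \<Rightarrow> 'n lvec \<Rightarrow> 'n lvec) \<Rightarrow> 'n lvec set \<Rightarrow> 'n lvec set" where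
  "derived br S = vec.span {br x y | x y. x \<in> S \<and> y \<in> S}"

definition solvable_lie :: "('n::finite lvec \<Rightarrow> 'n lvec \<Rightarrow> 'n lvec) \<Rightarrow> bool" where
  "solvable_lie br \<longleftrightarrow> lie_algebra br \<and> (\<exists>m. (derived br ^^ m) UNIV = {0})"

definition clinear_form :: "('n::finite lvec \<Rightarrow> complex) \<Rightarrow> bool" where
  "clinear_form f \<longleftrightarrow> (\<forall>a b x y. f (a *s x + b *s y) = a * f x + b * f y)"

text \<open>Closed 1-forms: d omega = 0, i.e. omega vanishes on all brackets.\<close>
definition closed_form :: "('n::finite lvec \<Rightarrow> 'n lvec \<Rightarrow> 'n lvec) \<Rightarrow> ('n lvec \<Rightarrow> complex) \<Rightarrow> bool" where
  "closed_form br \<omega> \<longleftrightarrow> clinear_form \<omega> \<and> (\<forall>x y. \<omega> (br x y) = 0)"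

text \<open>q-cochains: alternating complex-multilinear forms in the arguments X 0, ..., X (q-1),
  not depending on the remaining arguments.\<close>
definition cochain :: "nat \<Rightarrow> ((nat \<Rightarrow> 'n::finite lvec) \<Rightarrow> complex) \<Rightarrow> bool" where
  "cochain q f \<longleftrightarrow>
     (\<forall>X Y. (\<forall>i<q. X i = Y i) \<longrightarrow> f X = f Y) \<and>
     (\<forall>i<q. \<forall>X a b u v. f (X(i := a *s u + b *s v)) = a * f (X(i := u)) + b * f (X(i := v))) \<and>
     (\<forall>X i j. i < q \<longrightarrow> j < q \<longrightarrow> i \<noteq> j \<longrightarrow> X i = X j \<longrightarrow> f X = 0)"

definition del_arg :: "nat \<Rightarrow> (nat \<Rightarrow> 'a) \<Rightarrow> nat \<Rightarrow> 'a" where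
  "del_arg i X = (\<lambda>k. if k < i then X k else X (Suc k))"

definition cons_arg :: "'a \<Rightarrow> (nat \<Rightarrow> 'a) \<Rightarrow> nat \<Rightarrow> 'a" where
  "cons_arg x X = (\<lambda>k. if k = 0 then x else X (k - 1))"

text \<open>The Chevalley-Eilenberg differential d (as in the paper, 0-based indices) on q-cochains.\<close>
definition dCE :: "('n::finite lvec \<Rightarrow> 'n lvec \<Rightarrow> 'n lvec) \<Rightarrow> nat \<Rightarrow>
     ((nat \<Rightarrow> 'n lvec) \<Rightarrow> complex) \<Rightarrow> (nat \<Rightarrow> 'n lvec) \<Rightarrow> complex" where
  "dCE br q f X = (\<Sum>i<Suc q. \<Sum>j\<in>{i<..<Suc q}.
       (-1) ^ (i + j + 1) * f (cons_arg (br (X i) (X j)) (del_arg i (del_arg j X))))"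

definition wedge1 :: "('n::finite lvec \<Rightarrow> complex) \<Rightarrow> nat \<Rightarrow>
     ((nat \<Rightarrow> 'n lvec) \<Rightarrow> complex) \<Rightarrow> (nat \<Rightarrow> 'n lvec) \<Rightarrow> complex" where
  "wedge1 \<phi> q f X = (\<Sum>i<Suc q. (-1) ^ i * \<phi> (X i) * f (del_arg i X))"

definition dtw :: "('n::finite lvec \<Rightarrow> 'n lvec \<Rightarrow> 'n lvec) \<Rightarrow> ('n lvec \<Rightarrow> complex) \<Rightarrow> nat \<Rightarrow>
     ((nat \<Rightarrow> 'n lvec) \<Rightarrow> complex) \<Rightarrow> (nat \<Rightarrow> 'n lvec) \<Rightarrow> complex" where
  "dtw br \<phi> q f = (\<lambda>X. dCE br q f X + wedge1 \<phi> q f X)"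

fun coboundaries :: "('n::finite lvec \<Rightarrow> 'n lvec \<Rightarrow> 'n lvec) \<Rightarrow> ('n lvec \<Rightarrow> complex) \<Rightarrow> nat \<Rightarrow>
     ((nat \<Rightarrow> 'n lvec) \<Rightarrow> complex) set" where
  "coboundaries br \<phi> 0 = {\<lambda>X. 0}"
| "coboundaries br \<phi> (Suc q) = dtw br \<phi> q ` {g. cochain q g}"

definition twisted_cohom_nontrivial :: "('n::finite lvec \<Rightarrow> 'n lvec \<Rightarrow> 'n lvec) \<Rightarrow> ('n lvec \<Rightarrow> complex) \<Rightarrow> bool" where
  "twisted_cohom_nontrivial br \<phi> \<longleftrightarrow>
     (\<exists>q f. cochain q f \<and> dtw br \<phi> q f = (\<lambda>X. 0) \<and> f \<notin> coboundaries br \<phi> q)"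

text \<open>An ad-invariant complete flag in [g,g] (Lie's theorem) given by an adapted basis
  e 0, ..., e (m-1) of [g,g] with diagonal weights alpha j.\<close>
definition weight_flag :: "('n::finite lvec \<Rightarrow> 'n lvec \<Rightarrow> 'n lvec) \<Rightarrow> nat \<Rightarrow> (nat \<Rightarrow> 'n lvec) \<Rightarrow>
     (nat \<Rightarrow> 'n lvec \<Rightarrow> complex) \<Rightarrow> bool" where
  "weight_flag br m e \<alpha> \<longleftrightarrow>
     inj_on e {..<m} \<and> vec.independent (e ` {..<m}) \<and>
     vec.span (e ` {..<m}) = derived br UNIV \<and>
     (\<forall>j<m. \<forall>x. br x (e j) - \<alpha> j x *s e j \<in> vec.span (e ` {..<j}))"

definition weight_sums :: "nat \<Rightarrow> (nat \<Rightarrow> 'n::finite lvec \<Rightarrow> complex) \<Rightarrow> ('n lvec \<Rightarrow> complex) set" where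
  "weight_sums m \<alpha> = {(\<lambda>x. \<Sum>i\<in>I. \<alpha> i x) | I. I \<subseteq> {..<m} \<and> I \<noteq> {}}"

end

theory Submission
  imports Defs
begin


lemma del_cons0[simp]: "del_arg 0 (cons_arg x Y) = Y"
  by (auto simp: del_arg_def cons_arg_def)
lemma del_cons_Suc[simp]: "del_arg (Suc k) (cons_arg x Y) = cons_arg x (del_arg k Y)"
  by (rule ext) (auto simp: del_arg_def cons_arg_def)
lemma cons_upd0[simp]: "(cons_arg x Y)(0 := u) = cons_arg u Y"
  by (rule ext) (auto simp: cons_arg_def)
lemma cons_updSuc[simp]: "(cons_arg x Y)(Suc k := u) = cons_arg x (Y(k := u))"
  by (rule ext) (auto simp: cons_arg_def)
lemma cons0[simp]: "cons_arg x Y 0 = x" by (simp add: cons_arg_def)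
lemma consSuc[simp]: "cons_arg x Y (Suc k) = Y k" by (simp add: cons_arg_def)
lemma cons_tl: "cons_arg (W 0) (\<lambda>k. W (Suc k)) = W"
  by (rule ext) (auto simp: cons_arg_def not0_implies_Suc)
lemma del_Suc_tl: "del_arg (Suc k) Y = cons_arg (Y 0) (del_arg k (\<lambda>n. Y (Suc n)))"
  by (rule ext) (auto simp: cons_arg_def del_arg_def)
lemma cons_del0: "cons_arg a (del_arg 0 Y) = Y(0 := a)"
  by (rule ext) (auto simp: cons_arg_def del_arg_def not0_implies_Suc)
lemma cons_tl_upd: "cons_arg (Y 0) ((\<lambda>n. Y (Suc n))(k := a)) = Y(Suc k := a)"
  by (rule ext) (auto simp: cons_arg_def)
lemma gtlt_Suc: "{a<..<(b::nat)} = {Suc a..<b}" by auto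

definition iota :: "'n::finite lvec \<Rightarrow> ((nat \<Rightarrow> 'n lvec) \<Rightarrow> complex) \<Rightarrow> (nat \<Rightarrow> 'n lvec) \<Rightarrow> complex" where
  "iota x f Y = f (cons_arg x Y)"

definition theta :: "('n::finite lvec \<Rightarrow> 'n lvec \<Rightarrow> 'n lvec) \<Rightarrow> ('n lvec \<Rightarrow> complex) \<Rightarrow> nat \<Rightarrow>
   'n lvec \<Rightarrow> ((nat \<Rightarrow> 'n lvec) \<Rightarrow> complex) \<Rightarrow> (nat \<Rightarrow> 'n lvec) \<Rightarrow> complex" where
  "theta br ph q x f Y = ph x * f Y + (\<Sum>k<q. f (Y(k := br x (Y k))))"


lemma cochain_dep: "cochain q f \<Longrightarrow> (\<And>i. i<q \<Longrightarrow> X i = Y i) \<Longrightarrow> f X = f Y"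
  unfolding cochain_def by blast
lemma cochain_lin: "cochain q f \<Longrightarrow> i<q \<Longrightarrow> f (X(i := a *s u + b *s v)) = a * f (X(i:=u)) + b * f (X(i:=v))"
  unfolding cochain_def by blast
lemma cochain_alt: "cochain q f \<Longrightarrow> i<q \<Longrightarrow> j<q \<Longrightarrow> i\<noteq>j \<Longrightarrow> X i = X j \<Longrightarrow> f X = 0"
  unfolding cochain_def by blast
lemma cochain_add: "cochain q f \<Longrightarrow> i<q \<Longrightarrow> f (X(i := u + v)) = f (X(i:=u)) + f (X(i:=v))"
  using cochain_lin[of q f i X 1 u 1 v] by simp
lemma cochain_smult: "cochain q f \<Longrightarrow> i<q \<Longrightarrow> f (X(i := a *s u)) = a * f (X(i:=u))"
  using cochain_lin[of q f i X a u 0 u] by simp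
lemma cochain_zero: "cochain q f \<Longrightarrow> i<q \<Longrightarrow> f (X(i := 0)) = 0"
  using cochain_smult[of q f i X 0 0] by simp
lemma cochain_neg: "cochain q f \<Longrightarrow> i<q \<Longrightarrow> f (X(i := - u)) = - f (X(i:=u))"
  using cochain_smult[of q f i X "-1" u] by simp
lemma cochain_diff: "cochain q f \<Longrightarrow> i<q \<Longrightarrow> f (X(i := u - v)) = f (X(i:=u)) - f (X(i:=v))"
  using cochain_add[of q f i X u "-v"] cochain_neg[of q f i X v] by simp

lemma cochain_swap:
  assumes f: "cochain q f" and i: "i<q" and j: "j<q" and ij: "i\<noteq>j"
  shows "f (X(i:=a, j:=b)) = - f (X(i:=b, j:=a))"
proof -
  have z: "f (X(i:=c, j:=c)) = 0" for c
    by (rule cochain_alt[OF f i j ij]) (use ij in simp)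
  have "0 = f (X(i:=a+b, j:=a+b))" using z by simp
  also have "\<dots> = f (X(i:=a+b, j:=a)) + f (X(i:=a+b, j:=b))"
    by (rule cochain_add[OF f j])
  also have "f (X(i:=a+b, j:=a)) = f (X(j:=a, i:=a)) + f (X(j:=a, i:=b))"
    using cochain_add[OF f i, of "X(j:=a)" a b] ij by (simp add: fun_upd_twist)
  also have "f (X(i:=a+b, j:=b)) = f (X(j:=b, i:=a)) + f (X(j:=b, i:=b))"
    using cochain_add[OF f i, of "X(j:=b)" a b] ij by (simp add: fun_upd_twist)
  finally have s: "0 = f (X(j:=a, i:=a)) + f (X(j:=a, i:=b)) + (f (X(j:=b, i:=a)) + f (X(j:=b, i:=b)))" .
  have e1: "X(j:=a, i:=a) = X(i:=a, j:=a)" "X(j:=b, i:=b) = X(i:=b, j:=b)"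
     "X(j:=a, i:=b) = X(i:=b, j:=a)" "X(j:=b, i:=a) = X(i:=a, j:=b)"
    using ij by (auto intro: fun_upd_twist)
  have "0 = f (X(i:=b, j:=a)) + f (X(i:=a, j:=b))"
    using s unfolding e1 z by simp
  then show ?thesis by (simp add: eq_neg_iff_add_eq_0 add.commute)
qed

lemma cochain_iota: assumes "cochain (Suc p) f" shows "cochain p (iota x f)"
  unfolding cochain_def iota_def
proof (intro conjI allI impI)
  fix X Y :: "nat \<Rightarrow> 'a lvec" assume "\<forall>i<p. X i = Y i"
  then show "f (cons_arg x X) = f (cons_arg x Y)"
    by (intro cochain_dep[OF assms]) (auto simp: cons_arg_def)
next
  fix i X a b u v assume "i < p"
  then show "f (cons_arg x (X(i := a *s u + b *s v))) = a * f (cons_arg x (X(i := u))) + b * f (cons_arg x (X(i := v)))"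
    using cochain_lin[OF assms, of "Suc i" "cons_arg x X" a u b v] by simp
next
  fix X :: "nat \<Rightarrow> 'a lvec" and i j assume "i < p" "j < p" "i \<noteq> j" "X i = X j"
  then show "f (cons_arg x X) = 0"
    by (intro cochain_alt[OF assms, of "Suc i" "Suc j"]) auto
qed

lemma cochain_swap01:
  assumes "cochain (Suc (Suc p)) f"
  shows "f (cons_arg a (cons_arg b Z)) = - f (cons_arg b (cons_arg a Z))"
  using cochain_swap[OF assms, of 0 "Suc 0" "cons_arg a (cons_arg b Z)" b a] by simp

lemma move:
  assumes "cochain (Suc p) f" "k \<le> p"
  shows "f (cons_arg a (del_arg k Y)) = (-1)^k * f (Y(k := a))"
  using assms
proof (induction k arbitrary: p f Y)
  case 0
  then show ?case by (simp add: cons_del0)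
next
  case (Suc k)
  then obtain p' where p: "p = Suc p'" by (cases p) auto
  have f: "cochain (Suc (Suc p')) f" using Suc.prems p by simp
  have "f (cons_arg a (del_arg (Suc k) Y)) = f (cons_arg a (cons_arg (Y 0) (del_arg k (\<lambda>n. Y (Suc n)))))"
    by (simp add: del_Suc_tl)
  also have "\<dots> = - f (cons_arg (Y 0) (cons_arg a (del_arg k (\<lambda>n. Y (Suc n)))))"
    by (rule cochain_swap01[OF f])
  also have "f (cons_arg (Y 0) (cons_arg a (del_arg k (\<lambda>n. Y (Suc n))))) = iota (Y 0) f (cons_arg a (del_arg k (\<lambda>n. Y (Suc n))))"
    by (simp add: iota_def)
  also have "\<dots> = (-1)^k * iota (Y 0) f ((\<lambda>n. Y (Suc n))(k := a))"
    by (rule Suc.IH) (use cochain_iota[OF f] Suc.prems p in auto)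
  also have "iota (Y 0) f ((\<lambda>n. Y (Suc n))(k := a)) = f (Y(Suc k := a))"
    by (simp add: iota_def cons_tl_upd)
  finally show ?case by (simp only: power_Suc mult_minus1 mult_minus_left mult_1_left)
qed


lemma wedge_cons: "wedge1 ph (Suc p) f (cons_arg x Y) = ph x * f Y - wedge1 ph p (iota x f) Y"
  unfolding wedge1_def iota_def
  by (subst sum.lessThan_Suc_shift) (simp add: sum_negf[symmetric])

lemma sum_gtlt_Suc: "(\<Sum>j\<in>{Suc a<..<Suc n}. g j) = (\<Sum>b\<in>{a<..<n}. g (Suc b))"
  by (simp only: gtlt_Suc sum.shift_bounds_Suc_ivl)
lemma sum_gtlt_0: "(\<Sum>j\<in>{0<..<Suc n}. g j) = (\<Sum>b<n. g (Suc b))"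
  by (simp only: gtlt_Suc sum.shift_bounds_Suc_ivl atLeast0LessThan)

lemma dCE_cons:
  assumes f: "cochain (Suc p) f"
  shows "dCE br (Suc p) f (cons_arg x Y) = (\<Sum>k<Suc p. f (Y(k := br x (Y k)))) - dCE br p (iota x f) Y"
proof -
  define T where "T i j = (-1::complex) ^ (i + j + 1) * f (cons_arg (br (cons_arg x Y i) (cons_arg x Y j)) (del_arg i (del_arg j (cons_arg x Y))))" for i j
  have "dCE br (Suc p) f (cons_arg x Y) = (\<Sum>i<Suc (Suc p). \<Sum>j\<in>{i<..<Suc (Suc p)}. T i j)"
    unfolding dCE_def T_def by simp
  also have "\<dots> = (\<Sum>j\<in>{0<..<Suc (Suc p)}. T 0 j) + (\<Sum>a<Suc p. \<Sum>j\<in>{Suc a<..<Suc (Suc p)}. T (Suc a) j)"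
    by (rule sum.lessThan_Suc_shift)
  also have "(\<Sum>j\<in>{0<..<Suc (Suc p)}. T 0 j) = (\<Sum>k<Suc p. f (Y(k := br x (Y k))))"
  proof -
    have "(\<Sum>j\<in>{0<..<Suc (Suc p)}. T 0 j) = (\<Sum>k<Suc p. T 0 (Suc k))" by (rule sum_gtlt_0)
    also have "\<dots> = (\<Sum>k<Suc p. f (Y(k := br x (Y k))))"
    proof (rule sum.cong[OF refl])
      fix k assume k: "k \<in> {..<Suc p}"
      have "T 0 (Suc k) = (-1)^k * f (cons_arg (br x (Y k)) (del_arg k Y))"
        unfolding T_def by simp
      also have "\<dots> = (-1)^k * ((-1)^k * f (Y(k := br x (Y k))))"
        using move[OF f, of k "br x (Y k)" Y] k by simp
      also have "\<dots> = f (Y(k := br x (Y k)))"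
        by (simp flip: mult.assoc power_add add: power_even_eq[symmetric] del: fun_upd_apply)
      finally show "T 0 (Suc k) = f (Y(k := br x (Y k)))" .
    qed
    finally show ?thesis .
  qed
  also have "(\<Sum>a<Suc p. \<Sum>j\<in>{Suc a<..<Suc (Suc p)}. T (Suc a) j) = - dCE br p (iota x f) Y"
  proof -
    have "(\<Sum>a<Suc p. \<Sum>j\<in>{Suc a<..<Suc (Suc p)}. T (Suc a) j) = (\<Sum>a<Suc p. \<Sum>b\<in>{a<..<Suc p}. T (Suc a) (Suc b))"
      by (simp add: sum_gtlt_Suc)
    also have "\<dots> = (\<Sum>a<Suc p. \<Sum>b\<in>{a<..<Suc p}. - ((-1) ^ (a + b + 1) * iota x f (cons_arg (br (Y a) (Y b)) (del_arg a (del_arg b Y)))))"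
    proof (intro sum.cong refl)
      fix a b assume a: "a \<in> {..<Suc p}" and b: "b \<in> {a<..<Suc p}"
      then obtain p' where p: "p = Suc p'" by (cases p) auto
      have f': "cochain (Suc (Suc p')) f" using f p by simp
      show "T (Suc a) (Suc b) = - ((-1) ^ (a + b + 1) * iota x f (cons_arg (br (Y a) (Y b)) (del_arg a (del_arg b Y))))"
        unfolding T_def iota_def
        using cochain_swap01[OF f', of "br (Y a) (Y b)" x "del_arg a (del_arg b Y)"] by simp
    qed
    also have "\<dots> = - dCE br p (iota x f) Y"
      unfolding dCE_def by (simp add: sum_negf)
    finally show ?thesis .
  qed
  finally show ?thesis by (simp only: diff_conv_add_uminus)
qed


lemma dCE_0: "dCE br 0 f X = 0"
  unfolding dCE_def by (simp add: gtlt_Suc)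

lemma cartan0: "dtw br ph 0 f (cons_arg x Y) = theta br ph 0 x f Y"
  unfolding dtw_def theta_def wedge1_def by (simp add: dCE_0)

lemma cartan:
  assumes "cochain (Suc p) f"
  shows "dtw br ph (Suc p) f (cons_arg x Y) = theta br ph (Suc p) x f Y - dtw br ph p (iota x f) Y"
  unfolding dtw_def theta_def dCE_cons[OF assms] wedge_cons by (simp add: algebra_simps)

lemma iota_theta:
  "iota y (theta br ph (Suc p) x f) Z = theta br ph p x (iota y f) Z + iota (br x y) f Z"
  unfolding theta_def iota_def by (subst sum.lessThan_Suc_shift) (simp add: algebra_simps)

lemma dtw_lin: "dtw br ph q (\<lambda>Y. a * f Y + b * g Y) X = a * dtw br ph q f X + b * dtw br ph q g X"
proof -
  have "dCE br q (\<lambda>Y. a * f Y + b * g Y) X = a * dCE br q f X + b * dCE br q g X"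
    unfolding dCE_def by (simp add: ring_distribs sum.distrib sum_distrib_left mult.left_commute del: power_Suc)
  moreover have "wedge1 ph q (\<lambda>Y. a * f Y + b * g Y) X = a * wedge1 ph q f X + b * wedge1 ph q g X"
    unfolding wedge1_def by (simp add: ring_distribs sum.distrib sum_distrib_left mult.left_commute del: power_Suc)
  ultimately show ?thesis unfolding dtw_def by (simp add: algebra_simps)
qed

lemma dtw_zero: "dtw br ph q (\<lambda>Y. 0) X = 0"
  unfolding dtw_def dCE_def wedge1_def by simp

lemma theta_lin: "theta br ph q x (\<lambda>Y. a * f Y + b * g Y) X = a * theta br ph q x f X + b * theta br ph q x g X"
  unfolding theta_def by (simp add: algebra_simps sum.distrib sum_distrib_left)

lemma dtw_diff: "dtw br ph q (\<lambda>Y. f Y - g Y) X = dtw br ph q f X - dtw br ph q g X"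
  using dtw_lin[of br ph q 1 f "-1" g X] by simp
lemma dtw_add: "dtw br ph q (\<lambda>Y. f Y + g Y) X = dtw br ph q f X + dtw br ph q g X"
  using dtw_lin[of br ph q 1 f "1" g X] by simp
lemma theta_diff: "theta br ph q x (\<lambda>Y. f Y - g Y) X = theta br ph q x f X - theta br ph q x g X"
  using theta_lin[of br ph q x 1 f "-1" g X] by simp
lemma theta_add: "theta br ph q x (\<lambda>Y. f Y + g Y) X = theta br ph q x f X + theta br ph q x g X"
  using theta_lin[of br ph q x 1 f "1" g X] by simp

locale LA =
  fixes br :: "'n::finite lvec \<Rightarrow> 'n lvec \<Rightarrow> 'n lvec" and ph :: "'n lvec \<Rightarrow> complex"
  assumes lie: "lie_algebra br" and phl: "clinear_form ph" and phc: "\<And>x y. ph (br x y) = 0"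
begin

lemma br_lin1: "br (a *s x + b *s y) z = a *s br x z + b *s br y z"
  using lie unfolding lie_algebra_def by blast
lemma br_lin2: "br z (a *s x + b *s y) = a *s br z x + b *s br z y"
  using lie unfolding lie_algebra_def by blast
lemma br_self: "br x x = 0"
  using lie unfolding lie_algebra_def by blast
lemma jacobi: "br x (br y z) + br y (br z x) + br z (br x y) = 0"
  using lie unfolding lie_algebra_def by blast
lemma br_add1: "br (x + y) z = br x z + br y z" using br_lin1[of 1 x 1 y z] by simp
lemma br_add2: "br z (x + y) = br z x + br z y" using br_lin2[of z 1 x 1 y] by simp
lemma br_anti: "br x y = - br y x"
proof -
  have "0 = br (x + y) (x + y)" by (simp add: br_self)
  also have "\<dots> = br x y + br y x" by (simp only: br_add1 br_add2) (simp add: br_self)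
  finally show ?thesis by (metis eq_neg_iff_add_eq_0)
qed
lemma ph_lin: "ph (a *s x + b *s y) = a * ph x + b * ph y"
  using phl unfolding clinear_form_def by blast

lemma jac2: "br y (br x z) - br x (br y z) = - br (br x y) z"
proof -
  have "br y (br x z) = - br y (br z x)"
    using br_anti[of x z] br_lin2[of y "-1" "br z x" 0 0] by simp
  moreover have "br (br x y) z = - br z (br x y)" by (rule br_anti)
  moreover have "br x (br y z) = - (br y (br z x) + br z (br x y))"
    using jacobi[of x y z] by (subst eq_neg_iff_add_eq_0) (simp add: add.assoc)
  ultimately show ?thesis by (simp add: algebra_simps)
qed

lemma theta_comm:
  assumes f: "cochain q f"
  shows "theta br ph q x (theta br ph q y f) Z - theta br ph q y (theta br ph q x f) Z = - theta br ph q (br x y) f Z"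
proof -
  define M where "M x y i j = f ((Z(i := br x (Z i)))(j := br y ((Z(i := br x (Z i))) j)))" for x y i j
  have exp: "theta br ph q x (theta br ph q y f) Z = ph x * ph y * f Z + ph x * (\<Sum>j<q. f(Z(j:=br y (Z j))))
     + ph y * (\<Sum>i<q. f(Z(i:=br x (Z i)))) + (\<Sum>i<q. \<Sum>j<q. M x y i j)" for x y
    unfolding theta_def M_def by (simp add: sum.distrib sum_distrib_left algebra_simps)
  have sw: "(\<Sum>i<q. \<Sum>j<q. M y x i j) = (\<Sum>i<q. \<Sum>j<q. M y x j i)" by (rule sum.swap)
  have pt: "M x y i j - M y x j i = (if j = i then - f (Z(i := br (br x y) (Z i))) else 0)" if i: "i < q" for i j
  proof (cases "i = j")
    case True
    have "M x y i j - M y x j i = f (Z(i := br y (br x (Z i)))) - f (Z(i := br x (br y (Z i))))"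
      unfolding M_def True by simp
    also have "\<dots> = f (Z(i := br y (br x (Z i)) - br x (br y (Z i))))"
      by (rule cochain_diff[OF f i, symmetric])
    also have "\<dots> = - f (Z(i := br (br x y) (Z i)))"
      unfolding jac2 by (rule cochain_neg[OF f i])
    finally show ?thesis using True by simp
  next
    case False
    then show ?thesis unfolding M_def by (simp add: fun_upd_twist)
  qed
  have "(\<Sum>i<q. \<Sum>j<q. M x y i j) - (\<Sum>i<q. \<Sum>j<q. M y x i j) = (\<Sum>i<q. \<Sum>j<q. M x y i j - M y x j i)"
    unfolding sw by (simp add: sum_subtractf)
  also have "\<dots> = (\<Sum>i<q. \<Sum>j<q. (if j = i then - f (Z(i := br (br x y) (Z i))) else 0))"
    by (intro sum.cong refl) (simp add: pt)
  also have "\<dots> = (\<Sum>i<q. - f (Z(i := br (br x y) (Z i))))"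
    by simp
  finally have "(\<Sum>i<q. \<Sum>j<q. M x y i j) - (\<Sum>i<q. \<Sum>j<q. M y x i j) = (\<Sum>i<q. - f (Z(i := br (br x y) (Z i))))" .
  then show ?thesis unfolding exp unfolding theta_def
    by (simp add: phc sum_negf algebra_simps)
qed


lemma cochain_lincomb:
  fixes f g :: "(nat \<Rightarrow> 'n lvec) \<Rightarrow> complex"
  assumes f: "cochain q f" and g: "cochain q g"
  shows "cochain q (\<lambda>Y. a * f Y + b * g Y)"
  unfolding cochain_def
proof (intro conjI allI impI)
  fix X Y :: "nat \<Rightarrow> 'n lvec" assume "\<forall>i<q. X i = Y i"
  then show "a * f X + b * g X = a * f Y + b * g Y"
    using cochain_dep[OF f, of X Y] cochain_dep[OF g, of X Y] by simp
next
  fix i X c d u v assume i: "i < q"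
  show "a * f (X(i := c *s u + d *s v)) + b * g (X(i := c *s u + d *s v)) =
        c * (a * f (X(i := u)) + b * g (X(i := u))) + d * (a * f (X(i := v)) + b * g (X(i := v)))"
    using cochain_lin[OF f i] cochain_lin[OF g i] by (simp add: algebra_simps)
next
  fix X :: "nat \<Rightarrow> 'n lvec" and i j assume "i < q" "j < q" "i \<noteq> j" "X i = X j"
  then show "a * f X + b * g X = 0" using cochain_alt[OF f] cochain_alt[OF g] by simp
qed

lemma cochain_const0: "cochain q (\<lambda>Y. 0)"
  unfolding cochain_def by simp

lemma iota_vec_lin:
  assumes f: "cochain (Suc p) f"
  shows "iota (a *s x + b *s y) f Z = a * iota x f Z + b * iota y f Z"
  unfolding iota_def using cochain_lin[OF f, of 0 "cons_arg x Z" a x b y] by simp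

lemma theta_vec_lin:
  assumes f: "cochain q f"
  shows "theta br ph q (a *s x + b *s y) f Z = a * theta br ph q x f Z + b * theta br ph q y f Z"
proof -
  have "f (Z(k := br (a *s x + b *s y) (Z k))) = a * f (Z(k := br x (Z k))) + b * f (Z(k := br y (Z k)))"
    if "k < q" for k
    unfolding br_lin1 by (rule cochain_lin[OF f that])
  then show ?thesis unfolding theta_def ph_lin
    by (simp add: sum.distrib sum_distrib_left algebra_simps)
qed

lemma sum_two:
  assumes "i < (q::nat)" "j < q" "i \<noteq> j" "\<And>k. k < q \<Longrightarrow> k \<noteq> i \<Longrightarrow> k \<noteq> j \<Longrightarrow> T k = 0"
  shows "(\<Sum>k<q. T k) = T i + (T j :: complex)"
proof -
  have "(\<Sum>k<q. T k) = (\<Sum>k\<in>{i,j}. T k)"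
    by (rule sum.mono_neutral_right) (use assms in auto)
  then show ?thesis using assms by simp
qed

lemma cochain_theta:
  assumes f: "cochain q f"
  shows "cochain q (theta br ph q x f)"
  unfolding cochain_def
proof (intro conjI allI impI)
  fix X Y :: "nat \<Rightarrow> 'n lvec" assume XY: "\<forall>i<q. X i = Y i"
  have "f (X(k := br x (X k))) = f (Y(k := br x (Y k)))" if "k < q" for k
    by (rule cochain_dep[OF f]) (use XY that in auto)
  then show "theta br ph q x f X = theta br ph q x f Y"
    unfolding theta_def using cochain_dep[OF f, of X Y] XY by simp
next
  fix i X a b u v assume i: "i < q"
  have t: "f ((X(i := a *s u + b *s v))(k := br x ((X(i := a *s u + b *s v)) k))) =
     a * f ((X(i := u))(k := br x ((X(i := u)) k))) + b * f ((X(i := v))(k := br x ((X(i := v)) k)))"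
    if k: "k < q" for k
  proof (cases "k = i")
    case True
    then show ?thesis using cochain_lin[OF f i, of X a "br x u" b "br x v"] by (simp add: br_lin2)
  next
    case False
    then show ?thesis using cochain_lin[OF f i, of "X(k := br x (X k))" a u b v]
      by (simp add: fun_upd_twist)
  qed
  show "theta br ph q x f (X(i := a *s u + b *s v)) = a * theta br ph q x f (X(i := u)) + b * theta br ph q x f (X(i := v))"
    unfolding theta_def using t cochain_lin[OF f i, of X a u b v]
    by (simp add: sum.distrib sum_distrib_left algebra_simps)
next
  fix X :: "nat \<Rightarrow> 'n lvec" and i j assume ij: "i < q" "j < q" "i \<noteq> j" "X i = X j"
  have z: "f X = 0" by (rule cochain_alt[OF f ij])
  have "(\<Sum>k<q. f (X(k := br x (X k)))) = f (X(i := br x (X i))) + f (X(j := br x (X j)))"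
  proof (rule sum_two[OF ij(1,2,3)])
    fix k assume "k < q" "k \<noteq> i" "k \<noteq> j"
    then show "f (X(k := br x (X k))) = 0" by (intro cochain_alt[OF f ij(1,2,3)]) (use ij in auto)
  qed
  also have "\<dots> = 0"
  proof -
    have e1: "X(i := br x (X i)) = X(i := br x (X i), j := X j)" using ij by (auto simp: fun_eq_iff)
    have e2: "X(j := br x (X j)) = X(i := X j, j := br x (X i))" using ij by (auto simp: fun_eq_iff)
    have "f (X(i := br x (X i), j := X j)) = - f (X(i := X j, j := br x (X i)))"
      by (rule cochain_swap[OF f ij(1,2,3)])
    then show ?thesis by (subst e1, subst e2) simp
  qed
  finally show "theta br ph q x f X = 0" unfolding theta_def z by simp
qed


end



context LA begin

lemma d_split0: "dtw br ph 0 f W = ph (W 0) * f (\<lambda>n. W (Suc n))"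
  using cartan0[of br ph f "W 0" "\<lambda>n. W (Suc n)"] unfolding cons_tl theta_def by simp

lemma d_split:
  assumes "cochain (Suc p) f"
  shows "dtw br ph (Suc p) f W = theta br ph (Suc p) (W 0) f (\<lambda>n. W (Suc n)) - dtw br ph p (iota (W 0) f) (\<lambda>n. W (Suc n))"
  using cartan[OF assms, of br ph "W 0" "\<lambda>n. W (Suc n)"] unfolding cons_tl .

lemma iota_zero: assumes "cochain (Suc p) f" shows "iota 0 f Z = 0"
  using iota_vec_lin[OF assms, of 0 0 0 0 Z] by simp

lemma iota_anti: assumes "cochain (Suc p) f" shows "iota (br a b) f Z + iota (br b a) f Z = 0"
proof -
  have "iota (br a b) f Z + iota (br b a) f Z = iota (1 *s br a b + 1 *s br b a) f Z"
    using iota_vec_lin[OF assms, of 1 "br a b" 1 "br b a" Z] by simp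
  also have "1 *s br a b + 1 *s br b a = 0" using br_anti[of a b] by simp
  finally show ?thesis using iota_zero[OF assms] by simp
qed

lemma d_antisym01:
  assumes f: "cochain (Suc p) f"
  shows "dtw br ph (Suc p) f (cons_arg a (cons_arg b Z)) + dtw br ph (Suc p) f (cons_arg b (cons_arg a Z)) = 0"
proof -
  define E where "E a b = (case p of 0 \<Rightarrow> 0 | Suc p' \<Rightarrow> dtw br ph p' (iota b (iota a f)) Z)" for a b
  have key: "dtw br ph (Suc p) f (cons_arg a (cons_arg b Z)) =
     theta br ph p a (iota b f) Z + iota (br a b) f Z - theta br ph p b (iota a f) Z + E a b" for a b
  proof -
    have "dtw br ph (Suc p) f (cons_arg a (cons_arg b Z)) = theta br ph (Suc p) a f (cons_arg b Z) - dtw br ph p (iota a f) (cons_arg b Z)"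
      by (rule cartan[OF f])
    also have "theta br ph (Suc p) a f (cons_arg b Z) = theta br ph p a (iota b f) Z + iota (br a b) f Z"
      using iota_theta[of b br ph p a f Z] by (simp add: iota_def)
    also have "dtw br ph p (iota a f) (cons_arg b Z) = theta br ph p b (iota a f) Z - E a b"
    proof (cases p)
      case 0
      then show ?thesis unfolding E_def using cartan0 by simp
    next
      case (Suc p')
      have "cochain (Suc p') (iota a f)" using cochain_iota[OF f] Suc by simp
      from cartan[OF this] show ?thesis unfolding E_def Suc by simp
    qed
    finally show ?thesis by simp
  qed
  have EE: "E a b + E b a = 0"
  proof (cases p)
    case 0 then show ?thesis unfolding E_def by simp
  next
    case (Suc p')
    have f': "cochain (Suc (Suc p')) f" using f Suc by simp
    have "(\<lambda>Y. iota b (iota a f) Y + iota a (iota b f) Y) = (\<lambda>Y. 0)"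
    proof (rule ext)
      fix Y show "iota b (iota a f) Y + iota a (iota b f) Y = 0"
        unfolding iota_def using cochain_swap01[OF f', of b a Y] by simp
    qed
    then have "dtw br ph p' (\<lambda>Y. iota b (iota a f) Y + iota a (iota b f) Y) Z = 0"
      by (simp add: dtw_zero)
    then show ?thesis unfolding E_def Suc by (simp add: dtw_add)
  qed
  show ?thesis unfolding key using EE iota_anti[OF f, of a b Z]
    by (simp add: algebra_simps)
qed

lemma cochain_d: "cochain q f \<Longrightarrow> cochain (Suc q) (dtw br ph q f)"
proof (induction q arbitrary: f)
  case 0
  have c: "f X = f Y" for X Y using cochain_dep[OF "0.prems", of X Y] by simp
  show ?case unfolding cochain_def d_split0
  proof (intro conjI allI impI)
    fix X Y :: "nat \<Rightarrow> 'n lvec" assume "\<forall>i<Suc 0. X i = Y i"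
    then show "ph (X 0) * f (\<lambda>n. X (Suc n)) = ph (Y 0) * f (\<lambda>n. Y (Suc n))" using c by auto
  next
    fix i X a b u v assume "i < Suc 0"
    then show "ph ((X(i := a *s u + b *s v)) 0) * f (\<lambda>n. (X(i := a *s u + b *s v)) (Suc n)) =
         a * (ph ((X(i := u)) 0) * f (\<lambda>n. (X(i := u)) (Suc n))) + b * (ph ((X(i := v)) 0) * f (\<lambda>n. (X(i := v)) (Suc n)))"
      using c[of "\<lambda>n. (X(i := a *s u + b *s v)) (Suc n)" "\<lambda>n. X (Suc n)"]
        c[of "\<lambda>n. (X(i := u)) (Suc n)" "\<lambda>n. X (Suc n)"] c[of "\<lambda>n. (X(i := v)) (Suc n)" "\<lambda>n. X (Suc n)"]
      by (simp add: ph_lin algebra_simps)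
  qed auto
next
  case (Suc p)
  have f: "cochain (Suc p) f" by fact
  define D where "D = dtw br ph (Suc p) f"
  have Dsp: "D W = theta br ph (Suc p) (W 0) f (\<lambda>n. W (Suc n)) - dtw br ph p (iota (W 0) f) (\<lambda>n. W (Suc n))" for W
    unfolding D_def by (rule d_split[OF f])
  have ci: "cochain (Suc p) (dtw br ph p (iota x f))" for x
    using Suc.IH[OF cochain_iota[OF f]] .
  have ct: "cochain (Suc p) (theta br ph (Suc p) x f)" for x by (rule cochain_theta[OF f])
  have tailalt: "D W = 0" if "i < Suc (Suc p)" "j < Suc (Suc p)" "i \<noteq> j" "W i = W j" "0 < i" "0 < j" for W i j
  proof -
    from that(5) obtain i' where i': "i = Suc i'" using gr0_implies_Suc by blast
    from that(6) obtain j' where j': "j = Suc j'" using gr0_implies_Suc by blast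
    note ij = i' j'
    show ?thesis unfolding Dsp
      using cochain_alt[OF ct, of i' j' "\<lambda>n. W (Suc n)" "W 0"] cochain_alt[OF ci, of i' j' "\<lambda>n. W (Suc n)" "W 0"]
        that ij by simp
  qed
  have anti: "D (cons_arg a (cons_arg b Z)) = - D (cons_arg b (cons_arg a Z))" for a b Z
    using d_antisym01[OF f, of a b Z] unfolding D_def by (simp add: eq_neg_iff_add_eq_0)
  have W12: "W = cons_arg (W 0) (cons_arg (W 1) (\<lambda>n. W (Suc (Suc n))))" for W :: "nat \<Rightarrow> 'n lvec"
    using cons_tl[of W] cons_tl[of "\<lambda>n. W (Suc n)"] by simp
  have alt0: "D W = 0" if "0 < j" "j < Suc (Suc p)" "W 0 = W j" for W j
  proof (cases "j = 1")
    case True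
    have W: "W = cons_arg (W 0) (cons_arg (W 0) (\<lambda>n. W (Suc (Suc n))))"
      using W12[of W] that True by simp
    have "D W = - D W" by (subst W, subst (2) W, rule anti)
    then show ?thesis by simp
  next
    case False
    define W' where "W' = cons_arg (W 1) (cons_arg (W 0) (\<lambda>n. W (Suc (Suc n))))"
    note W = W12[of W]
    have "D W = - D W'" unfolding W'_def by (subst W, rule anti)
    moreover have "D W' = 0"
    proof (rule tailalt[of 1 j])
      have j2: "2 \<le> j" using \<open>0 < j\<close> False by simp
      define j'' where "j'' = j - 2"
      have j: "j = Suc (Suc j'')" using j2 unfolding j''_def by simp
      show "W' 1 = W' j" unfolding W'_def j using that j by simp
    qed (use that False in auto)
    ultimately show ?thesis by simp
  qed
  show ?case unfolding D_def[symmetric] cochain_def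
  proof (intro conjI allI impI)
    fix X Y :: "nat \<Rightarrow> 'n lvec" assume XY: "\<forall>i<Suc (Suc p). X i = Y i"
    show "D X = D Y" unfolding Dsp
      using cochain_dep[OF ct, of "\<lambda>n. X (Suc n)" "\<lambda>n. Y (Suc n)"] cochain_dep[OF ci, of "\<lambda>n. X (Suc n)" "\<lambda>n. Y (Suc n)"] XY
      by auto
  next
    fix i X a b u v assume i: "i < Suc (Suc p)"
    show "D (X(i := a *s u + b *s v)) = a * D (X(i := u)) + b * D (X(i := v))"
    proof (cases i)
      case 0
      have il: "iota (a *s u + b *s v) f = (\<lambda>Z. a * iota u f Z + b * iota v f Z)"
        by (rule ext) (rule iota_vec_lin[OF f])
      show ?thesis unfolding Dsp 0 using theta_vec_lin[OF f]
        by (simp add: il dtw_lin algebra_simps)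
    next
      case (Suc k)
      have k: "k < Suc p" using i Suc by simp
      have e: "(\<lambda>n. (X(Suc k := w)) (Suc n)) = (\<lambda>n. X (Suc n))(k := w)" for w by (auto simp: fun_eq_iff)
      have z: "(X(Suc k := w)) 0 = X 0" for w by simp
      note t1 = cochain_lin[OF ct k, of "X 0" "\<lambda>n. X (Suc n)" a u b v]
      note t2 = cochain_lin[OF ci k, of "X 0" "\<lambda>n. X (Suc n)" a u b v]
      show ?thesis unfolding Dsp Suc z e t1 t2 by (simp add: algebra_simps del: fun_upd_apply)
    qed
  next
    fix X :: "nat \<Rightarrow> 'n lvec" and i j assume ij: "i < Suc (Suc p)" "j < Suc (Suc p)" "i \<noteq> j" "X i = X j"
    show "D X = 0"
    proof (cases "i = 0 \<or> j = 0")
      case True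
      then show ?thesis using alt0[of j X] alt0[of i X] ij by auto
    next
      case False
      then show ?thesis using tailalt[OF ij] by auto
    qed
  qed
qed


lemma eval_cons: "(\<And>y Z. F (cons_arg y Z) = G (cons_arg y Z)) \<Longrightarrow> F = G"
proof (rule ext)
  fix W assume "\<And>y Z. F (cons_arg y Z) = G (cons_arg y Z)"
  then show "F W = G W" using cons_tl[of W] by metis
qed

lemma comm: "cochain q f \<Longrightarrow> dtw br ph q (theta br ph q x f) = theta br ph (Suc q) x (dtw br ph q f)"
proof (induction q arbitrary: f x)
  case 0
  show ?case
  proof (rule eval_cons)
    fix y Z
    have "dtw br ph 0 (theta br ph 0 x f) (cons_arg y Z) = ph y * (ph x * f Z)"
      unfolding cartan0 by (simp add: theta_def)
    moreover have "theta br ph (Suc 0) x (dtw br ph 0 f) (cons_arg y Z) = ph x * (ph y * f Z)"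
      unfolding theta_def by (simp add: cartan0 theta_def phc)
    ultimately show "dtw br ph 0 (theta br ph 0 x f) (cons_arg y Z) = theta br ph (Suc 0) x (dtw br ph 0 f) (cons_arg y Z)"
      by simp
  qed
next
  case (Suc p)
  have f: "cochain (Suc p) f" by fact
  show ?case
  proof (rule eval_cons)
    fix y Z
    have i1: "iota y (theta br ph (Suc p) x f) = (\<lambda>Z. theta br ph p x (iota y f) Z + iota (br x y) f Z)"
      by (rule ext) (rule iota_theta)
    have i2: "iota y (dtw br ph (Suc p) f) = (\<lambda>Z. theta br ph (Suc p) y f Z - dtw br ph p (iota y f) Z)"
      by (rule ext) (simp add: iota_def cartan[OF f])
    have IH: "dtw br ph p (theta br ph p x (iota y f)) = theta br ph (Suc p) x (dtw br ph p (iota y f))"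
      by (rule Suc.IH[OF cochain_iota[OF f]])
    have L: "dtw br ph (Suc p) (theta br ph (Suc p) x f) (cons_arg y Z) =
      theta br ph (Suc p) y (theta br ph (Suc p) x f) Z - (theta br ph (Suc p) x (dtw br ph p (iota y f)) Z + dtw br ph p (iota (br x y) f) Z)"
      unfolding cartan[OF cochain_theta[OF f]] i1 dtw_add IH ..
    have R: "theta br ph (Suc (Suc p)) x (dtw br ph (Suc p) f) (cons_arg y Z) =
      theta br ph (Suc p) x (theta br ph (Suc p) y f) Z - theta br ph (Suc p) x (dtw br ph p (iota y f)) Z
      + (theta br ph (Suc p) (br x y) f Z - dtw br ph p (iota (br x y) f) Z)"
    proof -
      have "theta br ph (Suc (Suc p)) x (dtw br ph (Suc p) f) (cons_arg y Z) =
        iota y (theta br ph (Suc (Suc p)) x (dtw br ph (Suc p) f)) Z" by (simp add: iota_def)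
      also have "\<dots> = theta br ph (Suc p) x (iota y (dtw br ph (Suc p) f)) Z + iota (br x y) (dtw br ph (Suc p) f) Z"
        by (rule iota_theta)
      also have "iota (br x y) (dtw br ph (Suc p) f) Z = theta br ph (Suc p) (br x y) f Z - dtw br ph p (iota (br x y) f) Z"
        by (simp add: iota_def cartan[OF f])
      finally show ?thesis unfolding i2 theta_diff .
    qed
    show "dtw br ph (Suc p) (theta br ph (Suc p) x f) (cons_arg y Z) =
          theta br ph (Suc (Suc p)) x (dtw br ph (Suc p) f) (cons_arg y Z)"
      unfolding L R using theta_comm[OF f, of x y Z] by (simp add: algebra_simps)
  qed
qed


definition "isIm p F \<longleftrightarrow> (\<exists>g. cochain p g \<and> F = dtw br ph p g)"
definition "isZ q F \<longleftrightarrow> cochain q F \<and> dtw br ph q F = (\<lambda>X. 0)"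

lemma isIm_lin: "isIm p F \<Longrightarrow> isIm p G \<Longrightarrow> isIm p (\<lambda>Y. a * F Y + b * G Y)"
  unfolding isIm_def
proof (elim exE conjE)
  fix g h assume g: "cochain p g" and h: "cochain p h" and F: "F = dtw br ph p g" and G: "G = dtw br ph p h"
  show "\<exists>k. cochain p k \<and> (\<lambda>Y. a * F Y + b * G Y) = dtw br ph p k"
    by (rule exI[of _ "\<lambda>Y. a * g Y + b * h Y"]) (simp add: cochain_lincomb[OF g h] F G dtw_lin fun_eq_iff)
qed

lemma isZ_lin: "isZ q F \<Longrightarrow> isZ q G \<Longrightarrow> isZ q (\<lambda>Y. a * F Y + b * G Y)"
  unfolding isZ_def by (simp add: cochain_lincomb dtw_lin fun_eq_iff)

lemma theta_zero: "theta br ph q x (\<lambda>Y. 0) = (\<lambda>Y. 0)"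
  unfolding theta_def by simp

lemma isZ_theta: "isZ q F \<Longrightarrow> isZ q (theta br ph q x F)"
  unfolding isZ_def using comm[of q F x] cochain_theta[of q F x] by (simp add: theta_zero)

lemma isIm_theta: assumes "isZ (Suc p) F" shows "isIm p (theta br ph (Suc p) x F)"
proof -
  have F: "cochain (Suc p) F" and d0: "dtw br ph (Suc p) F = (\<lambda>X. 0)" using assms unfolding isZ_def by auto
  have "theta br ph (Suc p) x F = dtw br ph p (iota x F)"
  proof (rule ext)
    fix Y show "theta br ph (Suc p) x F Y = dtw br ph p (iota x F) Y"
      using cartan[OF F, of br ph x Y] d0 by (simp add: fun_eq_iff)
  qed
  then show ?thesis unfolding isIm_def using cochain_iota[OF F] by blast
qed

definition "Qop q x L f = foldr (\<lambda>\<mu> g. (\<lambda>Y. theta br ph q x g Y - \<mu> * g Y)) L f"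

lemma Qop_Nil[simp]: "Qop q x [] f = f" unfolding Qop_def by simp
lemma Qop_Cons: "Qop q x (\<mu> # L) f = (\<lambda>Y. theta br ph q x (Qop q x L f) Y - \<mu> * Qop q x L f Y)"
  unfolding Qop_def by simp
lemma Qop_append: "Qop q x (L1 @ L2) f = Qop q x L1 (Qop q x L2 f)"
  unfolding Qop_def by simp

lemma Qop_Im:
  assumes "isZ (Suc p) f"
  shows "isZ (Suc p) (Qop (Suc p) x L f) \<and> isIm p (\<lambda>Y. Qop (Suc p) x L f Y - (\<Prod>\<mu>\<leftarrow>L. - \<mu>) * f Y)"
proof (induction L)
  case Nil
  have "isIm p (\<lambda>Y. 0)" unfolding isIm_def
    by (rule exI[of _ "\<lambda>Y. 0"]) (simp add: cochain_const0 dtw_zero fun_eq_iff)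
  then show ?case using assms by simp
next
  case (Cons \<mu> L)
  define g where "g = Qop (Suc p) x L f"
  define c where "c = (\<Prod>\<mu>\<leftarrow>L. - \<mu>)"
  have g: "isZ (Suc p) g" and h: "isIm p (\<lambda>Y. g Y - c * f Y)" using Cons unfolding g_def c_def by auto
  have tg: "isIm p (theta br ph (Suc p) x g)" by (rule isIm_theta[OF g])
  have "isZ (Suc p) (\<lambda>Y. 1 * theta br ph (Suc p) x g Y + (- \<mu>) * g Y)"
    by (rule isZ_lin[OF isZ_theta[OF g] g])
  moreover have "isIm p (\<lambda>Y. 1 * theta br ph (Suc p) x g Y + (- \<mu>) * (g Y - c * f Y))"
    using isIm_lin[OF tg h] .
  moreover have pc: "(\<Prod>\<mu>'\<leftarrow>\<mu> # L. - \<mu>') = - \<mu> * c" unfolding c_def by simp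
  ultimately show ?case unfolding Qop_Cons g_def[symmetric] pc
    by (simp add: algebra_simps)
qed

lemma Qop_kill:
  assumes "isZ (Suc p) f" and "Qop (Suc p) x L f = (\<lambda>Y. 0)" and "\<forall>\<mu>\<in>set L. \<mu> \<noteq> 0"
  shows "isIm p f"
proof -
  define c where "c = (\<Prod>\<mu>\<leftarrow>L. - \<mu>)"
  have c: "c \<noteq> 0" unfolding c_def using assms(3) by (induction L) auto
  have "isIm p (\<lambda>Y. 0 - c * f Y)" using Qop_Im[OF assms(1), of x L] assms(2) unfolding c_def by simp
  then have "isIm p (\<lambda>Y. (- 1 / c) * (0 - c * f Y) + 0 * (0 - c * f Y))"
    using isIm_lin by blast
  then show ?thesis using c by simp
qed

end



lemma slot_vanish:
  assumes g: "cochain q g" and i: "i < q" and U: "\<And>u. u \<in> U \<Longrightarrow> g (Y(i := u)) = 0"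
    and v: "v \<in> vec.span U"
  shows "g (Y(i := v)) = 0"
  using v
proof (induction rule: vec.span_induct)
  case base
  show ?case
  proof (rule vec.subspaceI)
    show "0 \<in> Collect (\<lambda>v. g (Y(i := v)) = 0)" using cochain_zero[OF g i] by simp
  next
    fix x y assume "x \<in> Collect (\<lambda>v. g (Y(i := v)) = 0)" "y \<in> Collect (\<lambda>v. g (Y(i := v)) = 0)"
    then show "x + y \<in> Collect (\<lambda>v. g (Y(i := v)) = 0)" using cochain_add[OF g i, of Y x y] by simp
  next
    fix c x assume "x \<in> Collect (\<lambda>v. g (Y(i := v)) = 0)"
    then show "c *s x \<in> Collect (\<lambda>v. g (Y(i := v)) = 0)" using cochain_smult[OF g i, of Y c x] by simp
  qed
next
  case (step x)
  then show ?case using U by blast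
qed

definition wt :: "nat \<Rightarrow> (nat \<Rightarrow> nat) \<Rightarrow> nat" where "wt q J = (\<Sum>i<q. J i)"
definition tup :: "nat \<Rightarrow> nat \<Rightarrow> (nat \<Rightarrow> nat) \<Rightarrow> bool" where "tup q N J \<longleftrightarrow> (\<forall>i<q. J i < N)"

lemma wt_upd_less: "i < q \<Longrightarrow> l < J i \<Longrightarrow> wt q (J(i := l)) < wt q J"
  unfolding wt_def by (rule sum_strict_mono_ex1) auto

locale TRI = LA br ph for br :: "'n::finite lvec \<Rightarrow> 'n lvec \<Rightarrow> 'n lvec" and ph +
  fixes x :: "'n lvec" and bb :: "nat \<Rightarrow> 'n lvec" and N :: nat and aa :: "nat \<Rightarrow> complex"
  assumes H1: "\<And>j. j < N \<Longrightarrow> br x (bb j) - aa j *s bb j \<in> vec.span (bb ` {..<j})"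
    and H2: "vec.span (bb ` {..<N}) = UNIV"
begin

definition "lam q J = ph x + (\<Sum>i<q. aa (J i))"

lemma tri:
  assumes g: "cochain q g" and J: "tup q N J" and i: "i < q"
    and low: "\<And>J'. tup q N J' \<Longrightarrow> wt q J' < wt q J \<Longrightarrow> g (\<lambda>k. bb (J' k)) = 0"
  shows "g ((\<lambda>k. bb (J k))(i := br x (bb (J i)))) = aa (J i) * g (\<lambda>k. bb (J k))"
proof -
  define v where "v = br x (bb (J i)) - aa (J i) *s bb (J i)"
  have Ji: "J i < N" using J i unfolding tup_def by auto
  have v: "v \<in> vec.span (bb ` {..<J i})" unfolding v_def by (rule H1[OF Ji])
  have e: "br x (bb (J i)) = aa (J i) *s bb (J i) + 1 *s v" unfolding v_def by simp
  have vz: "g ((\<lambda>k. bb (J k))(i := v)) = 0"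
  proof (rule slot_vanish[OF g i _ v])
    fix u assume "u \<in> bb ` {..<J i}"
    then obtain l where l: "l < J i" "u = bb l" by auto
    have wl: "wt q (J(i := l)) < wt q J" by (rule wt_upd_less) (use i l in auto)
    have "(\<lambda>k. bb (J k))(i := u) = (\<lambda>k. bb ((J(i := l)) k))" using l by (auto simp: fun_eq_iff)
    moreover have "g (\<lambda>k. bb ((J(i := l)) k)) = 0"
      by (rule low[OF _ wl]) (use J l Ji in \<open>auto simp: tup_def\<close>)
    ultimately show "g ((\<lambda>k. bb (J k))(i := u)) = 0" by simp
  qed
  have "g ((\<lambda>k. bb (J k))(i := br x (bb (J i)))) = aa (J i) * g ((\<lambda>k. bb (J k))(i := bb (J i))) + 1 * g ((\<lambda>k. bb (J k))(i := v))"
    unfolding e by (rule cochain_lin[OF g i])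
  also have "(\<lambda>k. bb (J k))(i := bb (J i)) = (\<lambda>k. bb (J k))" by (rule ext) simp
  finally show ?thesis by (simp only: vz mult_1_left mult_zero_right add_0_right)
qed

lemma theta_tri:
  assumes g: "cochain q g" and J: "tup q N J"
    and low: "\<And>J'. tup q N J' \<Longrightarrow> wt q J' < wt q J \<Longrightarrow> g (\<lambda>k. bb (J' k)) = 0"
  shows "theta br ph q x g (\<lambda>k. bb (J k)) = lam q J * g (\<lambda>k. bb (J k))"
proof -
  have "theta br ph q x g (\<lambda>k. bb (J k)) = ph x * g (\<lambda>k. bb (J k)) + (\<Sum>i<q. aa (J i) * g (\<lambda>k. bb (J k)))"
    unfolding theta_def
    by (intro arg_cong2[where f="(+)"] refl sum.cong) (rule tri[OF g J _ low], simp_all)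
  moreover have "(\<Sum>i<q. aa (J i) * g (\<lambda>k. bb (J k))) = (\<Sum>i<q. aa (J i)) * g (\<lambda>k. bb (J k))"
    by (rule sum_distrib_right[symmetric])
  ultimately show ?thesis unfolding lam_def by (simp add: algebra_simps)
qed

definition "Fil q s g \<longleftrightarrow> cochain q g \<and> (\<forall>J. tup q N J \<and> wt q J < s \<longrightarrow> g (\<lambda>k. bb (J k)) = 0)"

lemma Fil_step:
  assumes F: "Fil q s g"
  shows "Fil q s (\<lambda>Y. theta br ph q x g Y - \<mu> * g Y)"
    and "tup q N J \<Longrightarrow> wt q J \<le> s \<Longrightarrow> theta br ph q x g (\<lambda>k. bb (J k)) - \<mu> * g (\<lambda>k. bb (J k)) = (lam q J - \<mu>) * g (\<lambda>k. bb (J k))"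
proof -
  have g: "cochain q g" using F unfolding Fil_def by auto
  show lv: "theta br ph q x g (\<lambda>k. bb (J k)) - \<mu> * g (\<lambda>k. bb (J k)) = (lam q J - \<mu>) * g (\<lambda>k. bb (J k))"
    if J: "tup q N J" and w: "wt q J \<le> s" for J
    using theta_tri[OF g J] F w unfolding Fil_def by (simp add: algebra_simps)
  have c: "cochain q (\<lambda>Y. 1 * theta br ph q x g Y + (- \<mu>) * g Y)"
    by (rule cochain_lincomb[OF cochain_theta[OF g] g])
  show "Fil q s (\<lambda>Y. theta br ph q x g Y - \<mu> * g Y)"
    unfolding Fil_def
  proof (intro conjI allI impI)
    show "cochain q (\<lambda>Y. theta br ph q x g Y - \<mu> * g Y)" using c by simp
  next
    fix J assume J: "tup q N J \<and> wt q J < s"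
    then show "theta br ph q x g (\<lambda>k. bb (J k)) - \<mu> * g (\<lambda>k. bb (J k)) = 0"
      using lv[of J] F unfolding Fil_def by auto
  qed
qed

lemma Qop_level:
  assumes F: "Fil q s g"
  shows "Fil q s (Qop q x L g) \<and> (\<forall>J. tup q N J \<and> wt q J = s \<longrightarrow>
           Qop q x L g (\<lambda>k. bb (J k)) = (\<Prod>\<mu>\<leftarrow>L. lam q J - \<mu>) * g (\<lambda>k. bb (J k)))"
proof (induction L)
  case Nil
  then show ?case using F by simp
next
  case (Cons \<mu> L)
  have F': "Fil q s (Qop q x L g)" using Cons by simp
  have eqL: "\<forall>J. tup q N J \<and> wt q J = s \<longrightarrow>
           Qop q x L g (\<lambda>k. bb (J k)) = (\<Prod>\<mu>\<leftarrow>L. lam q J - \<mu>) * g (\<lambda>k. bb (J k))" using Cons by simp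
  show ?case unfolding Qop_Cons
  proof (intro conjI allI impI)
    show "Fil q s (\<lambda>Y. theta br ph q x (Qop q x L g) Y - \<mu> * Qop q x L g Y)" by (rule Fil_step(1)[OF F'])
  next
    fix J assume J: "tup q N J \<and> wt q J = s"
    have "theta br ph q x (Qop q x L g) (\<lambda>k. bb (J k)) - \<mu> * Qop q x L g (\<lambda>k. bb (J k))
        = (lam q J - \<mu>) * Qop q x L g (\<lambda>k. bb (J k))"
      by (rule Fil_step(2)[OF F']) (use J in auto)
    also have "\<dots> = (lam q J - \<mu>) * ((\<Prod>\<mu>\<leftarrow>L. lam q J - \<mu>) * g (\<lambda>k. bb (J k)))"
      using eqL J by simp
    finally show "theta br ph q x (Qop q x L g) (\<lambda>k. bb (J k)) - \<mu> * Qop q x L g (\<lambda>k. bb (J k)) =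
       (\<Prod>\<mu>\<leftarrow>\<mu> # L. lam q J - \<mu>) * g (\<lambda>k. bb (J k))" by simp
  qed
qed

lemma Qop_next:
  assumes F: "Fil q s g" and L: "\<And>J. tup q N J \<Longrightarrow> inj_on J {..<q} \<Longrightarrow> lam q J \<in> set L"
  shows "Fil q (Suc s) (Qop q x L g)"
proof -
  have g: "cochain q g" using F unfolding Fil_def by auto
  have lv: "Fil q s (Qop q x L g)"
    and eq: "\<And>J. tup q N J \<Longrightarrow> wt q J = s \<Longrightarrow> Qop q x L g (\<lambda>k. bb (J k)) = (\<Prod>\<mu>\<leftarrow>L. lam q J - \<mu>) * g (\<lambda>k. bb (J k))"
    using Qop_level[OF F, of L] by auto
  show ?thesis unfolding Fil_def
  proof (intro conjI allI impI)
    show "cochain q (Qop q x L g)" using lv unfolding Fil_def by auto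
  next
    fix J assume J: "tup q N J \<and> wt q J < Suc s"
    show "Qop q x L g (\<lambda>k. bb (J k)) = 0"
    proof (cases "wt q J < s")
      case True then show ?thesis using lv J unfolding Fil_def by auto
    next
      case False
      then have w: "wt q J = s" using J by simp
      show ?thesis
      proof (cases "inj_on J {..<q}")
        case True
        then have "lam q J \<in> set L" using L J by auto
        then have "(\<Prod>\<mu>\<leftarrow>L. lam q J - \<mu>) = 0" by (induction L) auto
        then show ?thesis using eq[of J] J w by simp
      next
        case False
        then obtain i j where ij: "i < q" "j < q" "i \<noteq> j" "J i = J j" unfolding inj_on_def by auto
        have "g (\<lambda>k. bb (J k)) = 0" by (rule cochain_alt[OF g ij(1,2,3)]) (use ij in simp)
        then show ?thesis using eq[of J] J w by simp
      qed
    qed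
  qed
qed

lemma Qop_iter:
  assumes F: "Fil q s g" and L: "\<And>J. tup q N J \<Longrightarrow> inj_on J {..<q} \<Longrightarrow> lam q J \<in> set L"
  shows "Fil q (s + S) (Qop q x (concat (replicate S L)) g)"
proof (induction S)
  case 0 then show ?case using F by simp
next
  case (Suc S)
  show ?case using Qop_next[OF Suc L] by (simp add: Qop_append)
qed

lemma vanish:
  assumes g: "cochain q g" and z: "\<And>J. tup q N J \<Longrightarrow> g (\<lambda>k. bb (J k)) = 0"
  shows "g = (\<lambda>Y. 0)"
proof -
  have P: "\<forall>Y. (\<forall>i. k \<le> i \<and> i < q \<longrightarrow> Y i \<in> bb ` {..<N}) \<longrightarrow> g Y = 0" if "k \<le> q" for k
    using that
  proof (induction k)
    case 0
    show ?case
    proof (intro allI impI)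
      fix Y assume Y: "\<forall>i. 0 \<le> i \<and> i < q \<longrightarrow> Y i \<in> bb ` {..<N}"
      define J where "J i = (SOME l. l < N \<and> Y i = bb l)" for i
      have J: "J i < N \<and> Y i = bb (J i)" if "i < q" for i
        unfolding J_def by (rule someI_ex) (use Y that in auto)
      have "g Y = g (\<lambda>k. bb (J k))" by (rule cochain_dep[OF g]) (use J in auto)
      also have "\<dots> = 0" by (rule z) (use J in \<open>auto simp: tup_def\<close>)
      finally show "g Y = 0" .
    qed
  next
    case (Suc k)
    have k: "k < q" using Suc by simp
    show ?case
    proof (intro allI impI)
      fix Y assume Y: "\<forall>i. Suc k \<le> i \<and> i < q \<longrightarrow> Y i \<in> bb ` {..<N}"
      have "g (Y(k := Y k)) = 0"
      proof (rule slot_vanish[OF g k])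
        fix u assume "u \<in> bb ` {..<N}"
        then have "\<forall>i. k \<le> i \<and> i < q \<longrightarrow> (Y(k := u)) i \<in> bb ` {..<N}" using Y by auto
        then show "g (Y(k := u)) = 0" using Suc.IH k by auto
      next
        show "Y k \<in> vec.span (bb ` {..<N})" using H2 by simp
      qed
      then show "g Y = 0" by simp
    qed
  qed
  show ?thesis using P[of q] by (auto simp: fun_eq_iff)
qed

lemma Qop_zero:
  assumes g: "cochain q g" and L: "\<And>J. tup q N J \<Longrightarrow> inj_on J {..<q} \<Longrightarrow> lam q J \<in> set L"
  shows "Qop q x (concat (replicate (q * N + 1) L)) g = (\<lambda>Y. 0)"
proof -
  have F0: "Fil q 0 g" using g unfolding Fil_def by simp
  have F: "Fil q (q * N + 1) (Qop q x (concat (replicate (q * N + 1) L)) g)"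
  proof -
    have e: "0 + (q * N + 1) = q * N + 1" by simp
    show ?thesis using Qop_iter[OF F0 L, of "q * N + 1"] unfolding e .
  qed
  show ?thesis
  proof (rule vanish)
    show "cochain q (Qop q x (concat (replicate (q * N + 1) L)) g)" using F unfolding Fil_def by auto
  next
    fix J assume J: "tup q N J"
    have "wt q J \<le> (\<Sum>i<q. N)" unfolding wt_def by (rule sum_mono) (use J in \<open>auto simp: tup_def\<close>)
    then have "wt q J < q * N + 1" by simp
    then show "Qop q x (concat (replicate (q * N + 1) L)) g (\<lambda>k. bb (J k)) = 0"
      using F J unfolding Fil_def by auto
  qed
qed

end



lemma ej_notin:
  assumes wf: "weight_flag br m e \<alpha>" and j: "j < m"
  shows "e j \<notin> vec.span (e ` {..<j})"
proof
  assume a: "e j \<in> vec.span (e ` {..<j})"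
  have inj: "inj_on e {..<m}" and ind: "vec.independent (e ` {..<m})" using wf unfolding weight_flag_def by auto
  have "e ` {..<j} \<subseteq> e ` {..<m} - {e j}"
    using inj j by (auto simp: inj_on_def)
  then have "e j \<in> vec.span (e ` {..<m} - {e j})" using a vec.span_mono by blast
  then have "vec.dependent (e ` {..<m})" unfolding vec.dependent_def using j by blast
  then show False using ind by simp
qed

lemma alpha_lin:
  assumes lie: "lie_algebra br" and wf: "weight_flag br m e \<alpha>" and j: "j < m"
  shows "\<alpha> j (a *s x + b *s y) = a * \<alpha> j x + b * \<alpha> j y"
proof (rule ccontr)
  define S where "S = vec.span (e ` {..<j})"
  define c where "c = a * \<alpha> j x + b * \<alpha> j y - \<alpha> j (a *s x + b *s y)"
  assume "\<alpha> j (a *s x + b *s y) \<noteq> a * \<alpha> j x + b * \<alpha> j y"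
  then have c0: "c \<noteq> 0" unfolding c_def by simp
  have H: "br z (e j) - \<alpha> j z *s e j \<in> vec.span (e ` {..<j})" for z using wf j unfolding weight_flag_def by blast
  have bl: "br (a *s x + b *s y) (e j) = a *s br x (e j) + b *s br y (e j)"
    using lie unfolding lie_algebra_def by blast
  have "(br (a *s x + b *s y) (e j) - \<alpha> j (a *s x + b *s y) *s e j) - a *s (br x (e j) - \<alpha> j x *s e j)
      - b *s (br y (e j) - \<alpha> j y *s e j) \<in> S"
    using vec.span_diff[OF vec.span_diff[OF H[of "a *s x + b *s y"] vec.span_scale[OF H[of x], of a]] vec.span_scale[OF H[of y], of b]]
    unfolding S_def .
  also have "(br (a *s x + b *s y) (e j) - \<alpha> j (a *s x + b *s y) *s e j) - a *s (br x (e j) - \<alpha> j x *s e j)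
      - b *s (br y (e j) - \<alpha> j y *s e j) = c *s e j"
    unfolding bl c_def by (simp add: algebra_simps vector_sadd_rdistrib vector_ssub_ldistrib scalar_mult_eq_scaleR)
  finally have "c *s e j \<in> S" .
  then have "(1 / c) *s (c *s e j) \<in> S" unfolding S_def by (rule vec.span_scale)
  then have "e j \<in> S" using c0 by simp
  then show False using ej_notin[OF wf j] unfolding S_def by simp
qed

lemma generic_point:
  fixes F :: "('n::finite lvec \<Rightarrow> complex) set"
  assumes "finite F" "\<forall>\<psi>\<in>F. clinear_form \<psi> \<and> (\<exists>x. \<psi> x \<noteq> 0)"
  shows "\<exists>X. \<forall>\<psi>\<in>F. \<psi> X \<noteq> 0"
  using assms
proof (induction F rule: finite_induct)
  case empty then show ?case by simp
next
  case (insert \<psi> F)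
  obtain X0 where X0: "\<forall>\<psi>'\<in>F. \<psi>' X0 \<noteq> 0" using insert by auto
  show ?case
  proof (cases "\<psi> X0 = 0")
    case False then show ?thesis using X0 by auto
  next
    case True
    obtain Y where Y: "\<psi> Y \<noteq> 0" using insert by auto
    have "finite (insert 0 ((\<lambda>\<psi>'. - \<psi>' X0 / \<psi>' Y) ` F))" using insert by simp
    then obtain t :: complex where t: "t \<notin> insert 0 ((\<lambda>\<psi>'. - \<psi>' X0 / \<psi>' Y) ` F)"
      using ex_new_if_finite[OF infinite_UNIV_char_0] by blast
    have lin: "\<psi>' (1 *s X0 + t *s Y) = \<psi>' X0 + t * \<psi>' Y" if "clinear_form \<psi>'" for \<psi>'
      using that[unfolded clinear_form_def, rule_format, of 1 X0 t Y] by simp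
    show ?thesis
    proof (intro exI ballI)
      fix \<psi>' assume p: "\<psi>' \<in> insert \<psi> F"
      have l: "clinear_form \<psi>'" using insert p by auto
      show "\<psi>' (1 *s X0 + t *s Y) \<noteq> 0"
      proof (cases "\<psi>' = \<psi>")
        case True then show ?thesis using lin[OF l] True \<open>\<psi> X0 = 0\<close> Y t by simp
      next
        case False
        then have pF: "\<psi>' \<in> F" using p by simp
        show ?thesis
        proof
          assume z: "\<psi>' (1 *s X0 + t *s Y) = 0"
          show False
          proof (cases "\<psi>' Y = 0")
            case True then show False using z lin[OF l] X0 pF by simp
          next
            case False
            then have "t = - \<psi>' X0 / \<psi>' Y" using z lin[OF l] by (simp add: field_simps eq_neg_iff_add_eq_0)
            then show False using t pF by auto
          qed
        qed
      qed
    qed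
  qed
qed

context LA begin

lemma vanish_thm:
  assumes wf: "weight_flag br m e \<alpha>" and X: "\<forall>I \<subseteq> {..<m}. ph X + (\<Sum>j\<in>I. \<alpha> j X) \<noteq> 0"
  shows "\<not> twisted_cohom_nontrivial br ph"
proof
  assume "twisted_cohom_nontrivial br ph"
  then obtain q f where f: "cochain q f" and d: "dtw br ph q f = (\<lambda>X. 0)" and nb: "f \<notin> coboundaries br ph q"
    unfolding twisted_cohom_nontrivial_def by blast
  have ph0: "ph X \<noteq> 0" using X[rule_format, of "{}"] by simp
  show False
  proof (cases q)
    case 0
    have c: "f Y = f Z" for Y Z using cochain_dep[OF f[unfolded 0], of Y Z] by simp
    have "ph X * f (\<lambda>n. (cons_arg X Z) (Suc n)) = 0" for Z
      using d[unfolded 0] d_split0[of f "cons_arg X Z"] by (simp add: fun_eq_iff)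
    then have "f Z = 0" for Z using ph0 c by (metis mult_eq_0_iff)
    then have "f = (\<lambda>X. 0)" by auto
    then show False using nb 0 by simp
  next
    case (Suc p)
    define N where "N = m + CARD('n)"
    obtain h where h: "bij_betw h {0..<CARD('n)} (UNIV :: 'n set)"
      using ex_bij_betw_nat_finite[of "UNIV :: 'n set"] by auto
    define bb where "bb j = (if j < m then e j else axis (h (j - m)) 1)" for j
    define aa where "aa j = (if j < m then \<alpha> j X else 0)" for j
    have span_e: "vec.span (e ` {..<m}) = derived br UNIV" using wf unfolding weight_flag_def by auto
    have bbe: "bb ` {..<j} = e ` {..<j}" if "j \<le> m" for j using that unfolding bb_def by auto
    have H1: "br X (bb j) - aa j *s bb j \<in> vec.span (bb ` {..<j})" if j: "j < N" for j
    proof (cases "j < m")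
      case True
      then show ?thesis using wf unfolding weight_flag_def bb_def aa_def bbe[of j] using bbe[of j] True
        by (simp add: bbe)
    next
      case False
      have "br X (bb j) \<in> derived br UNIV" unfolding derived_def by (rule vec.span_base) auto
      also have "\<dots> = vec.span (bb ` {..<m})" using span_e bbe[of m] by simp
      also have "\<dots> \<subseteq> vec.span (bb ` {..<j})" using False by (intro vec.span_mono) auto
      finally show ?thesis using False unfolding aa_def by simp
    qed
    have H2: "vec.span (bb ` {..<N}) = UNIV"
    proof -
      have "cart_basis \<subseteq> bb ` {..<N}"
      proof
        fix v assume "v \<in> (cart_basis :: 'n lvec set)"
        then obtain i where v: "v = axis i 1" unfolding cart_basis_def by auto
        have "i \<in> h ` {0..<CARD('n)}" using h unfolding bij_betw_def by simp
        then obtain t where t: "t < CARD('n)" "h t = i" by auto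
        have "bb (m + t) = v" unfolding bb_def v using t by simp
        moreover have "m + t < N" unfolding N_def using t by simp
        ultimately show "v \<in> bb ` {..<N}" by force
      qed
      then have "vec.span cart_basis \<subseteq> vec.span (bb ` {..<N})" by (rule vec.span_mono)
      then show ?thesis by auto
    qed
    have T: "TRI br ph X bb N aa"
      by (intro TRI.intro LA_axioms TRI_axioms.intro H1 H2)
    interpret T: TRI br ph X bb N aa by (rule T)
    define Lset where "Lset = (\<lambda>I. ph X + (\<Sum>j\<in>I. \<alpha> j X)) ` Pow {..<m}"
    obtain L where L: "set L = Lset" using finite_list[of Lset] unfolding Lset_def by auto
    have Lnz: "\<forall>\<mu>\<in>set L. \<mu> \<noteq> 0" using X unfolding L Lset_def by auto
    have Lin: "T.lam q J \<in> set L" if J: "tup q N J" and inj: "inj_on J {..<q}" for J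
    proof -
      have "(\<Sum>i<q. aa (J i)) = (\<Sum>j\<in>J ` {..<q}. aa j)" by (rule sum.reindex[OF inj, symmetric, unfolded comp_def])
      also have "\<dots> = (\<Sum>j\<in>J ` {..<q} \<inter> {..<m}. \<alpha> j X)"
        by (subst sum.inter_restrict) (auto simp: aa_def)
      finally have "T.lam q J = ph X + (\<Sum>j\<in>J ` {..<q} \<inter> {..<m}. \<alpha> j X)" unfolding T.lam_def by simp
      then show ?thesis unfolding L Lset_def by auto
    qed
    have Z: "isZ (Suc p) f" unfolding isZ_def using f d Suc by simp
    have "Qop (Suc p) X (concat (replicate (Suc p * N + 1) L)) f = (\<lambda>Y. 0)"
      using T.Qop_zero[of "Suc p" f L] f Lin Suc by simp
    moreover have "\<forall>\<mu>\<in>set (concat (replicate (Suc p * N + 1) L)). \<mu> \<noteq> 0"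
    proof -
      have "set (concat (replicate n L)) \<subseteq> set L" for n by (induction n) auto
      then show ?thesis using Lnz by blast
    qed
    ultimately have "isIm p f" using Qop_kill[OF Z] by blast
    then show False using nb Suc unfolding isIm_def by auto
  qed
qed

end



lemma key:
  fixes br :: "'n::finite lvec \<Rightarrow> 'n lvec \<Rightarrow> 'n lvec"
  assumes sol: "solvable_lie br" and wf: "weight_flag br m e \<alpha>" and cl: "closed_form br \<omega>"
    and nt: "twisted_cohom_nontrivial br (\<lambda>x. c * \<omega> x)"
  shows "\<exists>I \<subseteq> {..<m}. \<forall>x. c * \<omega> x + (\<Sum>j\<in>I. \<alpha> j x) = 0"
proof (rule ccontr)
  define ph where "ph = (\<lambda>x. c * \<omega> x)"
  have lie: "lie_algebra br" using sol unfolding solvable_lie_def by auto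
  have wl: "clinear_form \<omega>" and wz: "\<And>x y. \<omega> (br x y) = 0" using cl unfolding closed_form_def by auto
  have phl: "clinear_form ph" using wl unfolding clinear_form_def ph_def by (simp add: algebra_simps)
  have LA: "LA br ph" by (rule LA.intro[OF lie phl]) (simp add: ph_def wz)
  assume "\<not> (\<exists>I \<subseteq> {..<m}. \<forall>x. c * \<omega> x + (\<Sum>j\<in>I. \<alpha> j x) = 0)"
  then have nz: "\<forall>I \<subseteq> {..<m}. \<exists>x. ph x + (\<Sum>j\<in>I. \<alpha> j x) \<noteq> 0" unfolding ph_def by auto
  define F where "F = (\<lambda>I. \<lambda>x. ph x + (\<Sum>j\<in>I. \<alpha> j x)) ` Pow {..<m}"
  have "\<exists>X. \<forall>\<psi>\<in>F. \<psi> X \<noteq> 0"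
  proof (rule generic_point)
    show "finite F" unfolding F_def by simp
    show "\<forall>\<psi>\<in>F. clinear_form \<psi> \<and> (\<exists>x. \<psi> x \<noteq> 0)"
    proof
      fix \<psi> assume "\<psi> \<in> F"
      then obtain I where I: "I \<subseteq> {..<m}" and p: "\<psi> = (\<lambda>x. ph x + (\<Sum>j\<in>I. \<alpha> j x))" unfolding F_def by auto
      have "clinear_form \<psi>" unfolding clinear_form_def p
      proof (intro allI)
        fix a b x y
        have "(\<Sum>j\<in>I. \<alpha> j (a *s x + b *s y)) = (\<Sum>j\<in>I. a * \<alpha> j x + b * \<alpha> j y)"
          by (rule sum.cong[OF refl]) (use alpha_lin[OF lie wf] I in auto)
        then show "ph (a *s x + b *s y) + (\<Sum>j\<in>I. \<alpha> j (a *s x + b *s y)) =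
             a * (ph x + (\<Sum>j\<in>I. \<alpha> j x)) + b * (ph y + (\<Sum>j\<in>I. \<alpha> j y))"
          using phl unfolding clinear_form_def by (simp add: sum.distrib sum_distrib_left algebra_simps)
      qed
      then show "clinear_form \<psi> \<and> (\<exists>x. \<psi> x \<noteq> 0)" using nz I p by auto
    qed
  qed
  then obtain X where X: "\<forall>\<psi>\<in>F. \<psi> X \<noteq> 0" by blast
  have "\<forall>I \<subseteq> {..<m}. ph X + (\<Sum>j\<in>I. \<alpha> j X) \<noteq> 0" using X unfolding F_def by auto
  from LA.vanish_thm[OF LA wf this] nt show False unfolding ph_def by simp
qed

lemma nontriv_zero: "twisted_cohom_nontrivial br (\<lambda>x. 0)"
  unfolding twisted_cohom_nontrivial_def
proof (intro exI conjI)
  show "cochain 0 (\<lambda>X. 1)" unfolding cochain_def by simp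
  show "dtw br (\<lambda>x. 0) 0 (\<lambda>X. 1) = (\<lambda>X. 0)" unfolding dtw_def wedge1_def by (simp add: dCE_0)
  show "(\<lambda>X. 1) \<notin> coboundaries br (\<lambda>x. 0) 0" by (simp add: fun_eq_iff)
qed

theorem mainTheorem4:
  fixes br :: "'n::finite lvec \<Rightarrow> 'n lvec \<Rightarrow> 'n lvec"
    and m :: nat and e :: "nat \<Rightarrow> 'n lvec" and \<alpha> :: "nat \<Rightarrow> 'n lvec \<Rightarrow> complex"
  assumes "solvable_lie br"
    and "weight_flag br m e \<alpha>"
  shows "\<exists>\<Omega>t \<subseteq> weight_sums m \<alpha>.
           (\<forall>\<omega> (c::complex). closed_form br \<omega> \<longrightarrow>
              (twisted_cohom_nontrivial br (\<lambda>x. c * \<omega> x) \<longleftrightarrow>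
               (\<lambda>x. - c * \<omega> x) \<in> {\<lambda>x. 0} \<union> \<Omega>t))
         \<and> finite {(\<lambda>x. - c * \<omega> x) | \<omega> (c::complex).
                     closed_form br \<omega> \<and> twisted_cohom_nontrivial br (\<lambda>x. c * \<omega> x)}"
proof -
  have fwd: "(\<lambda>x. - c * \<omega> x) \<in> {\<lambda>x. 0} \<union> weight_sums m \<alpha>"
    if cl: "closed_form br \<omega>" and nt: "twisted_cohom_nontrivial br (\<lambda>x. c * \<omega> x)" for \<omega> c
  proof -
    obtain I where I: "I \<subseteq> {..<m}" and z: "\<forall>x. c * \<omega> x + (\<Sum>j\<in>I. \<alpha> j x) = 0"
      using key[OF assms cl nt] by blast
    have eq: "(\<lambda>x. - c * \<omega> x) = (\<lambda>x. \<Sum>j\<in>I. \<alpha> j x)"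
    proof
      fix x have "c * \<omega> x + (\<Sum>j\<in>I. \<alpha> j x) = 0" using z by blast
      then show "- c * \<omega> x = (\<Sum>j\<in>I. \<alpha> j x)" by (simp add: add_eq_0_iff)
    qed
    show ?thesis
    proof (cases "I = {}")
      case True then show ?thesis using eq by simp
    next
      case False then show ?thesis unfolding eq weight_sums_def using I by blast
    qed
  qed
  define \<Omega>t where "\<Omega>t = {\<psi> \<in> weight_sums m \<alpha>. \<exists>\<omega> c. closed_form br \<omega> \<and> \<psi> = (\<lambda>x. - c * \<omega> x) \<and> twisted_cohom_nontrivial br (\<lambda>x. c * \<omega> x)}"
  have iff: "twisted_cohom_nontrivial br (\<lambda>x. c * \<omega> x) \<longleftrightarrow> (\<lambda>x. - c * \<omega> x) \<in> {\<lambda>x. 0} \<union> \<Omega>t"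
    if cl: "closed_form br \<omega>" for \<omega> c
  proof
    assume nt: "twisted_cohom_nontrivial br (\<lambda>x. c * \<omega> x)"
    then show "(\<lambda>x. - c * \<omega> x) \<in> {\<lambda>x. 0} \<union> \<Omega>t" using fwd[OF cl nt] cl unfolding \<Omega>t_def by blast
  next
    assume "(\<lambda>x. - c * \<omega> x) \<in> {\<lambda>x. 0} \<union> \<Omega>t"
    then consider "(\<lambda>x. - c * \<omega> x) = (\<lambda>x. 0)" | "(\<lambda>x. - c * \<omega> x) \<in> \<Omega>t" by blast
    then show "twisted_cohom_nontrivial br (\<lambda>x. c * \<omega> x)"
    proof cases
      case 1
      then have "(\<lambda>x. c * \<omega> x) = (\<lambda>x. 0)" by (auto simp: fun_eq_iff)
      then show ?thesis using nontriv_zero by simp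
    next
      case 2
      then obtain \<omega>' c' where e: "(\<lambda>x. - c * \<omega> x) = (\<lambda>x. - c' * \<omega>' x)" and nt: "twisted_cohom_nontrivial br (\<lambda>x. c' * \<omega>' x)"
        unfolding \<Omega>t_def by blast
      have "(\<lambda>x. c * \<omega> x) = (\<lambda>x. c' * \<omega>' x)"
      proof
        fix x show "c * \<omega> x = c' * \<omega>' x" using fun_cong[OF e, of x] by simp
      qed
      then show ?thesis using nt by simp
    qed
  qed
  have fin: "finite {(\<lambda>x. - c * \<omega> x) | \<omega> (c::complex). closed_form br \<omega> \<and> twisted_cohom_nontrivial br (\<lambda>x. c * \<omega> x)}"
  proof (rule finite_subset)
    show "{(\<lambda>x. - c * \<omega> x) | \<omega> (c::complex). closed_form br \<omega> \<and> twisted_cohom_nontrivial br (\<lambda>x. c * \<omega> x)}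
        \<subseteq> {\<lambda>x. 0} \<union> weight_sums m \<alpha>" using fwd by blast
    have "weight_sums m \<alpha> \<subseteq> (\<lambda>I. (\<lambda>x. \<Sum>i\<in>I. \<alpha> i x)) ` Pow {..<m}" unfolding weight_sums_def by auto
    then have "finite (weight_sums m \<alpha>)" by (rule finite_subset) simp
    then show "finite ({\<lambda>x. 0} \<union> weight_sums m \<alpha>)" by simp
  qed
  show ?thesis
    by (rule exI[of _ \<Omega>t]) (use iff fin in \<open>auto simp: \<Omega>t_def\<close>)
qed

end
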